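(* Let $\lambda\in D\setminus\{0\}$ and put $\widetilde g^\lambda(z)=\sum_{m=0}^\infty\lambda^{\sigma_\infty(m)}z^m$ for $z\in D$. Then \[ \mathcal{F}\big(\widetilde g^\lambda-1\big)=\frac{\widetilde g^\lambda-1}{\lambda}+\Big(\lambda-\frac1\lambda\Big)z . \]
   Context: $T$ is the Collatz map $T(n)=\frac{3n+1}2$ ($n$ odd), $T(n)=\frac n2$ ($n$ even). The total stopping time $\sigma_\infty(n)$, for a positive integer $n$, is the least $k\ge0$ with $T^k(n)=1$ (and $\sigma_\infty(n)=\infty$ if no such $k$ exists); also $\sigma_\infty(0):=0$. Convention: $\lambda^\infty=0$ for $|\lambda|<1$. $D$ is the open unit disk, $A(D)$ the holomorphic functions on $D$, and $\mathcal{F}$ the operator on $A(D)$ given by $\mathcal{F}\big(\sum_{n\ge0}a_nz^n\big)=\sum_{n\ge0}a_nz^{2n}+\sum_{k\ge0}a_{3k+2}z^{2k+1}$. *)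

theory Defs
  imports "HOL-Complex_Analysis.Complex_Analysis" "HOL-Library.Extended_Nat"
begin

definition collatzT :: "nat \<Rightarrow> nat" where
  "collatzT n = (if odd n then (3 * n + 1) div 2 else n div 2)"

text \<open>Total stopping time; infinity if the orbit never hits 1; sigma(0) = 0 by convention.\<close>
definition sigma_inf :: "nat \<Rightarrow> enat" where
  "sigma_inf n = (if n = 0 then 0
     else if (\<exists>k. (collatzT ^^ k) n = 1) then enat (LEAST k. (collatzT ^^ k) n = 1)
     else \<infinity>)"

definition epow :: "complex \<Rightarrow> enat \<Rightarrow> complex" where
  "epow l e = (case e of enat k \<Rightarrow> l ^ k | \<infinity> \<Rightarrow> 0)"

definition gtilde :: "complex \<Rightarrow> complex \<Rightarrow> complex" where
  "gtilde l z = (\<Sum>m. epow l (sigma_inf m) * z ^ m)"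

definition taylor_coeff :: "(complex \<Rightarrow> complex) \<Rightarrow> nat \<Rightarrow> complex" where
  "taylor_coeff f n = (deriv ^^ n) f 0 / fact n"

definition opF :: "(complex \<Rightarrow> complex) \<Rightarrow> complex \<Rightarrow> complex" where
  "opF f z = (\<Sum>n. taylor_coeff f n * z ^ (2 * n))
            + (\<Sum>k. taylor_coeff f (3 * k + 2) * z ^ (2 * k + 1))"

end

theory Submission
  imports Defs
begin

lemma collatzT_pos: "n \<ge> 1 \<Longrightarrow> collatzT n \<ge> 1"
  unfolding collatzT_def by auto

lemma sigma_step:
  assumes "n \<ge> 2"
  shows "sigma_inf n = eSuc (sigma_inf (collatzT n))"
proof -
  have Tn: "collatzT n \<noteq> 0" using collatzT_pos[of n] assms by auto
  have sh: "(collatzT ^^ Suc k) n = (collatzT ^^ k) (collatzT n)" for k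
    by (simp add: funpow_Suc_right del: funpow.simps)
  show ?thesis
  proof (cases "\<exists>k. (collatzT ^^ k) n = 1")
    case True
    then obtain k where k: "(collatzT ^^ k) n = 1" by blast
    with assms have "k \<noteq> 0" by (cases k) auto
    then obtain j where j: "k = Suc j" by (cases k) auto
    have ex2: "\<exists>k. (collatzT ^^ k) (collatzT n) = 1" using k j sh by metis
    have L0: "(LEAST k. (collatzT ^^ k) n = 1) = Suc (LEAST k. (collatzT ^^ Suc k) n = 1)"
      by (rule Least_Suc[of "\<lambda>k. (collatzT ^^ k) n = 1" k, OF k]) (use assms in auto)
    have L: "(LEAST k. (collatzT ^^ k) n = 1) = Suc (LEAST k. (collatzT ^^ k) (collatzT n) = 1)"
      using L0 by (simp only: sh)
    have "sigma_inf n = enat (LEAST k. (collatzT ^^ k) n = 1)"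
      unfolding sigma_inf_def using True assms by simp
    also have "\<dots> = eSuc (enat (LEAST k. (collatzT ^^ k) (collatzT n) = 1))"
      unfolding L by (simp add: eSuc_enat)
    also have "enat (LEAST k. (collatzT ^^ k) (collatzT n) = 1) = sigma_inf (collatzT n)"
      unfolding sigma_inf_def using ex2 Tn by simp
    finally show ?thesis .
  next
    case False
    have "\<not> (\<exists>k. (collatzT ^^ k) (collatzT n) = 1)"
      using False sh by metis
    then show ?thesis using False assms Tn by (simp add: sigma_inf_def)
  qed
qed

lemma sigma1: "sigma_inf (Suc 0) = 0"
  unfolding sigma_inf_def by (auto intro!: Least_equality exI[of _ 0] simp: zero_enat_def)

lemma collatz2: "collatzT (Suc (Suc 0)) = Suc 0" by (simp add: collatzT_def)

lemma sigma2: "sigma_inf (Suc (Suc 0)) = 1"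
proof -
  have "sigma_inf (Suc (Suc 0)) = eSuc (sigma_inf (Suc 0))" using sigma_step[of 2] by (simp add: collatz2 numeral_2_eq_2)
  then show ?thesis by (simp add: sigma1 one_eSuc)
qed

lemma epow_eSuc: "epow l (eSuc e) = l * epow l e"
  by (cases e) (auto simp: epow_def eSuc_enat)

definition aa :: "complex \<Rightarrow> nat \<Rightarrow> complex" where
  "aa l m = epow l (sigma_inf m) - (if m = 0 then 1 else 0)"

lemma aa0: "aa l 0 = 0"
  by (simp add: aa_def sigma_inf_def epow_def zero_enat_def)

lemma aa_bound: assumes "norm l \<le> 1" shows "norm (aa l m) \<le> 1"
proof (cases "m = 0")
  case True then show ?thesis by (simp add: aa0)
next
  case False
  then have "aa l m = epow l (sigma_inf m)" by (simp add: aa_def)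
  also have "norm \<dots> \<le> 1"
    using assms by (cases "sigma_inf m") (auto simp: epow_def norm_power power_le_one)
  finally show ?thesis .
qed

lemma aa_even: "aa l (2 * n) = l * aa l n"
proof (cases "n = 0")
  case True then show ?thesis by (simp add: aa0)
next
  case False
  have "collatzT (2 * n) = n" by (simp add: collatzT_def)
  then show ?thesis using False sigma_step[of "2*n"]
    by (simp add: aa_def epow_eSuc)
qed

lemma aa_odd: "aa l (2 * k + 1) = l * aa l (3 * k + 2) + (if k = 0 then 1 - l^2 else 0)"
proof (cases "k = 0")
  case True then show ?thesis
    by (simp add: aa_def sigma1 sigma2 epow_def zero_enat_def one_enat_def power2_eq_square)
next
  case False
  have "collatzT (2 * k + 1) = 3 * k + 2" by (simp add: collatzT_def)
  then show ?thesis using False sigma_step[of "2*k+1"]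
    by (simp add: aa_def epow_eSuc)
qed

lemma summable_aa:
  assumes "norm (z::complex) < 1" and that: "\<And>m. norm (c m) \<le> 1"
  shows "summable (\<lambda>m. norm (c m * z ^ m))"
proof (rule summable_comparison_test[OF _ summable_geometric[of "norm z"]])
  show "\<exists>N. \<forall>n\<ge>N. norm (norm (c n * z ^ n)) \<le> norm z ^ n"
    using that by (auto simp: norm_mult norm_power intro!: mult_left_le_one_le)
qed (use assms in auto)

lemma gtilde_eq:
  assumes "norm l \<le> 1" "norm (z::complex) < 1"
  shows "(\<lambda>m. aa l m * z ^ m) sums (gtilde l z - 1)"
proof -
  have sE: "summable (\<lambda>m. epow l (sigma_inf m) * z ^ m)"
  proof (rule summable_norm_cancel, rule summable_aa[OF assms(2)])
    fix m show "norm (epow l (sigma_inf m)) \<le> 1"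
      using assms by (cases "sigma_inf m") (auto simp: epow_def norm_power power_le_one)
  qed
  have "(\<lambda>m. epow l (sigma_inf m) * z ^ m - (if m = 0 then 1 else 0)) sums (gtilde l z - 1)"
    unfolding gtilde_def by (intro sums_diff summable_sums sE) (rule sums_single[of 0 "\<lambda>_. 1::complex", simplified])
  moreover have "(\<lambda>m. aa l m * z ^ m) = (\<lambda>m. epow l (sigma_inf m) * z ^ m - (if m = 0 then 1 else 0))"
    by (auto simp: aa_def fun_eq_iff algebra_simps)
  ultimately show ?thesis by simp
qed

lemma taylor_aa:
  assumes "norm l \<le> 1"
  shows "taylor_coeff (\<lambda>w. gtilde l w - 1) n = aa l n"
proof -
  define F where "F = Abs_fps (aa l)"
  have s: "summable (\<lambda>m. aa l m * (1/2::complex) ^ m)"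
    using gtilde_eq[OF assms, of "1/2"] by (auto simp: sums_iff)
  have "fps_conv_radius F \<ge> norm (1/2::complex)"
    unfolding F_def fps_conv_radius_def using s by (intro conv_radius_geI) auto
  then have r: "fps_conv_radius F > 0"
    by (rule less_le_trans[rotated]) auto
  have ev: "eventually (\<lambda>z. eval_fps F z = gtilde l z - 1) (nhds 0)"
  proof -
    have "eventually (\<lambda>z. z \<in> ball 0 1) (nhds (0::complex))"
      by (intro eventually_nhds_in_open) auto
    then show ?thesis
    proof eventually_elim
      case (elim z)
      then have "norm z < 1" by auto
      from sums_unique[OF gtilde_eq[OF assms this]] show ?case
        by (simp add: eval_fps_def F_def)
    qed
  qed
  have "(\<lambda>w. gtilde l w - 1) has_fps_expansion F"
    unfolding has_fps_expansion_def using r ev by auto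
  from fps_nth_fps_expansion[OF this, of n] show ?thesis
    by (simp add: taylor_coeff_def F_def)
qed


theorem mainTheorem10:
  fixes l :: complex
  assumes "l \<in> ball 0 1" and "l \<noteq> 0"
  shows "\<forall>z \<in> ball 0 1.
           opF (\<lambda>w. gtilde l w - 1) z = (gtilde l z - 1) / l + (l - 1 / l) * z"
proof
  fix z :: complex assume "z \<in> ball 0 1"
  then have z: "norm z < 1" by auto
  have nl: "norm l \<le> 1" using assms by auto
  define a where "a = aa l"
  define ce where "ce m = (if even m then a (m div 2) else 0)" for m
  define co where "co m = (if odd m then a (3 * (m div 2) + 2) else 0)" for m
  have ab: "norm (a m) \<le> 1" for m unfolding a_def by (rule aa_bound[OF nl])
  have sce: "summable (\<lambda>m. ce m * z ^ m)"
    by (rule summable_norm_cancel, rule summable_aa[OF z]) (auto simp: ce_def ab)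
  have sco: "summable (\<lambda>m. co m * z ^ m)"
    by (rule summable_norm_cancel, rule summable_aa[OF z]) (auto simp: co_def ab)
  have r1: "odd n" if "n \<notin> range (\<lambda>k. 2*k)" for n :: nat
    using that by (metis evenE rangeI)
  have r2: "even n" if "n \<notin> range (\<lambda>k. Suc (2*k))" for n :: nat
    using that by (metis oddE rangeI Suc_eq_plus1)
  have "(\<lambda>n. ce (2*n) * z ^ (2*n)) sums (\<Sum>m. ce m * z ^ m)"
    using summable_sums[OF sce]
    by (subst sums_mono_reindex[of "\<lambda>n. 2*n"])
       (auto simp: strict_mono_def ce_def dest: r1)
  then have e: "(\<Sum>n. a n * z ^ (2*n)) = (\<Sum>m. ce m * z ^ m)"
    by (simp add: ce_def sums_iff)
  have "(\<lambda>n. co (2*n+1) * z ^ (2*n+1)) sums (\<Sum>m. co m * z ^ m)"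
    using summable_sums[OF sco]
    by (subst sums_mono_reindex[of "\<lambda>n. 2*n+1"])
       (auto simp: strict_mono_def co_def dest: r2)
  then have o: "(\<Sum>k. a (3*k+2) * z ^ (2*k+1)) = (\<Sum>m. co m * z ^ m)"
    by (simp add: co_def sums_iff)
  have cc: "ce m + co m = a m / l + (if m = 1 then l - 1 / l else 0)" for m
  proof (cases "even m")
    case True
    then obtain n where "m = 2 * n" by (auto elim: evenE)
    then show ?thesis using assms(2) aa_even[of l n]
      by (auto simp: ce_def co_def a_def field_simps)
  next
    case False
    then obtain k where m: "m = 2 * k + 1" by (auto elim: oddE)
    then show ?thesis using assms(2) aa_odd[of l k]
      by (auto simp: ce_def co_def a_def field_simps power2_eq_square)
  qed
  have sa: "(\<lambda>m. a m * z ^ m) sums (gtilde l z - 1)"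
    unfolding a_def by (rule gtilde_eq[OF nl z])
  have "(\<lambda>m. a m * z ^ m / l + (if m = 1 then (l - 1 / l) * z ^ m else 0)) sums
          ((gtilde l z - 1) / l + (l - 1 / l) * z ^ 1)"
    by (intro sums_add sums_divide sa sums_single)
  moreover have "(\<lambda>m. a m * z ^ m / l + (if m = 1 then (l - 1 / l) * z ^ m else 0))
       = (\<lambda>m. ce m * z ^ m + co m * z ^ m)"
    by (auto simp: fun_eq_iff distrib_right[symmetric] cc field_simps)
  ultimately have "(\<lambda>m. ce m * z ^ m + co m * z ^ m) sums ((gtilde l z - 1) / l + (l - 1 / l) * z)"
    by simp
  moreover have "(\<lambda>m. ce m * z ^ m + co m * z ^ m) sums ((\<Sum>m. ce m * z ^ m) + (\<Sum>m. co m * z ^ m))"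
    by (intro sums_add summable_sums sce sco)
  ultimately have "(\<Sum>m. ce m * z ^ m) + (\<Sum>m. co m * z ^ m) = (gtilde l z - 1) / l + (l - 1 / l) * z"
    using sums_unique2 by blast
  then show "opF (\<lambda>w. gtilde l w - 1) z = (gtilde l z - 1) / l + (l - 1 / l) * z"
    unfolding opF_def taylor_aa[OF nl] e[unfolded a_def] o[unfolded a_def] .
qed

end
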